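(* Let $\mathbf{M}=\mathrm{diag}(\lambda_1,\dots,\lambda_N)$ with $\lambda_1>\lambda_2>\cdots>\lambda_r>\lambda_{r+1}\ge\cdots\ge\lambda_N\ge0$, and let $d_{\min}=\min_{1\le s<j\le r+1}(\lambda_s-\lambda_j)$. Let $\epsilon>0$ and $\mathbf{X}=[\bm{x}_1,\dots,\bm{x}_r]\in\mathrm{St}(N,r)$ with $\|\mathrm{grad}\,g(\mathbf{X})\|_F\le\epsilon$. For each $j\in[r]$ let $i_j\in[N]$ be an index minimizing $|\bm{x}_j^\top\mathbf{M}\bm{x}_j-\lambda_n|$ over $n\in[N]$, and set $\boldsymbol{\Lambda}_\Omega=\mathrm{diag}(\lambda_{i_1},\dots,\lambda_{i_r})$, $\mathbf{X}_\Omega=[\bm{e}_{i_1},\dots,\bm{e}_{i_r}]$. Then (i) $\|\mathbf{X}^\top\mathbf{M}\mathbf{X}-\boldsymbol{\Lambda}_\Omega\|_F\le4\epsilon$; (ii) if $(i_1,\dots,i_r)=(1,\dots,r)$, then there exist signs $s_1,\dots,s_r\in\{\pm1\}$ such that $\|\mathbf{X}-\mathbf{X}_\Omega\,\mathrm{diag}(s_1,\dots,s_r)\|_F\le 12\,d_{\min}^{-1}\epsilon$ (with $s_j=1$ whenever $\mathbf{X}(j,j)\ge0$).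
   Context: $\bm{e}_i$ is the $i$-th standard basis vector of $\mathbb{R}^N$. $\mathrm{St}(N,r)=\{\mathbf{X}\in\mathbb{R}^{N\times r}:\mathbf{X}^\top\mathbf{X}=\mathbf{I}_r\}$, $\mathbf{N}=\mathrm{diag}(r,r-1,\dots,1)$, $g(\mathbf{X})=-\tfrac12\mathrm{tr}(\mathbf{X}^\top\mathbf{M}\mathbf{X}\mathbf{N})$, with Riemannian gradient $\mathrm{grad}\,g(\mathbf{X})=(\mathbf{X}\mathbf{X}^\top-\mathbf{I}_N)\mathbf{M}\mathbf{X}\mathbf{N}-\tfrac12\mathbf{X}[\mathbf{X}^\top\mathbf{M}\mathbf{X},\mathbf{N}]$, where $[\mathbf{A},\mathbf{B}]=\mathbf{A}\mathbf{B}-\mathbf{B}\mathbf{A}$. *)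

theory Defs
  imports Complex_Main
begin

text \<open>Real matrices are represented as functions nat => nat => real; the dimensions
  are carried explicitly. Indices are 0-based: an m x n matrix has entries A i j with
  i < m, j < n.\<close>

type_synonym rmat = "nat \<Rightarrow> nat \<Rightarrow> real"

definition mat_mult :: "rmat \<Rightarrow> nat \<Rightarrow> rmat \<Rightarrow> rmat" where
  "mat_mult A k B = (\<lambda>i j. \<Sum>l<k. A i l * B l j)"

definition mat_transp :: "rmat \<Rightarrow> rmat" where
  "mat_transp A = (\<lambda>i j. A j i)"

definition mat_add :: "rmat \<Rightarrow> rmat \<Rightarrow> rmat" where
  "mat_add A B = (\<lambda>i j. A i j + B i j)"

definition mat_sub :: "rmat \<Rightarrow> rmat \<Rightarrow> rmat" where
  "mat_sub A B = (\<lambda>i j. A i j - B i j)"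

definition mat_scale :: "real \<Rightarrow> rmat \<Rightarrow> rmat" where
  "mat_scale c A = (\<lambda>i j. c * A i j)"

definition mat_diag :: "(nat \<Rightarrow> real) \<Rightarrow> rmat" where
  "mat_diag d = (\<lambda>i j. if i = j then d i else 0)"

definition mat_id :: rmat where
  "mat_id = mat_diag (\<lambda>_. 1)"

definition commutator :: "nat \<Rightarrow> rmat \<Rightarrow> rmat \<Rightarrow> rmat" where
  "commutator k A B = mat_sub (mat_mult A k B) (mat_mult B k A)"

definition frob :: "nat \<Rightarrow> nat \<Rightarrow> rmat \<Rightarrow> real" where
  "frob m n A = sqrt (\<Sum>i<m. \<Sum>j<n. (A i j)\<^sup>2)"

definition stiefel :: "nat \<Rightarrow> nat \<Rightarrow> rmat \<Rightarrow> bool" where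
  "stiefel N r X \<longleftrightarrow> (\<forall>j<r. \<forall>k<r. mat_mult (mat_transp X) N X j k = mat_id j k)"

definition std_basis :: "nat \<Rightarrow> nat \<Rightarrow> real" where
  "std_basis i = (\<lambda>k. if k = i then 1 else 0)"

definition Nmat :: "nat \<Rightarrow> rmat" where
  "Nmat r = mat_diag (\<lambda>j. real r - real j)"

text \<open>Riemannian gradient of g(X) = -1/2 tr(X^T M X N):
  grad g(X) = (X X^T - I_N) M X N - 1/2 X [X^T M X, N], an N x r matrix.\<close>
definition grad_g :: "nat \<Rightarrow> nat \<Rightarrow> rmat \<Rightarrow> rmat \<Rightarrow> rmat" where
  "grad_g N r M X =
     mat_sub
       (mat_mult (mat_mult (mat_mult (mat_sub (mat_mult X r (mat_transp X)) mat_id) N M) N X) r (Nmat r))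
       (mat_scale (1/2) (mat_mult X r (commutator r (mat_mult (mat_mult (mat_transp X) N M) N X) (Nmat r))))"

end

theory Submission imports Defs begin

lemma orth_expand:
  fixes X :: "nat \<Rightarrow> nat \<Rightarrow> real" and v c :: "nat \<Rightarrow> real"
  assumes orth: "\<And>k k'. k < r \<Longrightarrow> k' < r \<Longrightarrow> (\<Sum>n<N. X n k * X n k') = (if k = k' then 1 else 0)"
    and vo: "\<And>k. k < r \<Longrightarrow> (\<Sum>n<N. v n * X n k) = 0"
  shows "(\<Sum>n<N. (v n + (\<Sum>k<r. X n k * c k))\<^sup>2) = (\<Sum>n<N. (v n)\<^sup>2) + (\<Sum>k<r. (c k)\<^sup>2)"
proof -
  have cross: "(\<Sum>n<N. v n * (\<Sum>k<r. X n k * c k)) = 0"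
  proof -
    have "(\<Sum>n<N. v n * (\<Sum>k<r. X n k * c k)) = (\<Sum>n<N. \<Sum>k<r. v n * X n k * c k)"
      by (simp add: sum_distrib_left mult.assoc)
    also have "\<dots> = (\<Sum>k<r. \<Sum>n<N. v n * X n k * c k)" by (rule sum.swap)
    also have "\<dots> = (\<Sum>k<r. (\<Sum>n<N. v n * X n k) * c k)" by (simp add: sum_distrib_right)
    also have "\<dots> = 0" using vo by simp
    finally show ?thesis .
  qed
  have sq: "(\<Sum>n<N. (\<Sum>k<r. X n k * c k)\<^sup>2) = (\<Sum>k<r. (c k)\<^sup>2)"
  proof -
    have "(\<Sum>n<N. (\<Sum>k<r. X n k * c k)\<^sup>2) = (\<Sum>n<N. \<Sum>k<r. \<Sum>k'<r. c k * c k' * (X n k * X n k'))"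
      by (simp add: power2_eq_square sum_product mult_ac)
    also have "\<dots> = (\<Sum>k<r. \<Sum>n<N. \<Sum>k'<r. c k * c k' * (X n k * X n k'))" by (rule sum.swap)
    also have "\<dots> = (\<Sum>k<r. \<Sum>k'<r. \<Sum>n<N. c k * c k' * (X n k * X n k'))"
      by (simp add: sum.swap[of _ "{..<N}"])
    also have "\<dots> = (\<Sum>k<r. \<Sum>k'<r. c k * c k' * (\<Sum>n<N. X n k * X n k'))"
      by (simp add: sum_distrib_left)
    also have "\<dots> = (\<Sum>k<r. \<Sum>k'<r. c k * c k' * (if k = k' then 1 else 0))"
      by (simp add: orth)
    also have "\<dots> = (\<Sum>k<r. \<Sum>k'<r. if k = k' then c k * c k' else 0)"
      by (intro sum.cong refl) simp
    also have "\<dots> = (\<Sum>k<r. (c k)\<^sup>2)" by (simp add: power2_eq_square)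
    finally show ?thesis .
  qed
  have "(\<Sum>n<N. (v n + (\<Sum>k<r. X n k * c k))\<^sup>2) =
     (\<Sum>n<N. (v n)\<^sup>2) + 2 * (\<Sum>n<N. v n * (\<Sum>k<r. X n k * c k)) + (\<Sum>n<N. (\<Sum>k<r. X n k * c k)\<^sup>2)"
    by (simp add: power2_sum sum.distrib sum_distrib_left mult.assoc)
  then show ?thesis using cross sq by simp
qed

lemma sum_delta_r: "(\<Sum>l<(N::nat). f l * (if l = m then g l else 0)) = (if m < N then f m * g m else (0::real))"
proof -
  have eq: "(\<lambda>l. f l * (if l = m then g l else 0)) = (\<lambda>l. if l = m then f m * g m else 0)" by auto
  show ?thesis by (subst eq, subst sum.delta) auto
qed

lemma sum_delta_l: "(\<Sum>l<(N::nat). (if m = l then g l else 0) * f l) = (if m < N then g m * f m else (0::real))"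
proof -
  have eq: "(\<lambda>l. (if m = l then g l else 0) * f l) = (\<lambda>l. if l = m then g m * f m else 0)" by auto
  show ?thesis by (subst eq, subst sum.delta) auto
qed

lemma mult_diag: "j < r \<Longrightarrow> mat_mult P r (mat_diag d) n j = P n j * d j"
  by (simp add: mat_mult_def mat_diag_def sum_delta_r)

lemma mult_Nmat: "j < r \<Longrightarrow> mat_mult P r (Nmat r) n j = P n j * (real r - real j)"
  by (simp add: Nmat_def mult_diag)

lemma sign_sq: "\<bar>a::real\<bar> \<le> 1 \<Longrightarrow> (\<bar>a\<bar> - 1)\<^sup>2 \<le> 1 - a\<^sup>2"
proof -
  assume h: "\<bar>a\<bar> \<le> 1"
  have "(\<bar>a\<bar> - 1)\<^sup>2 = (1 - \<bar>a\<bar>) * (1 - \<bar>a\<bar>)" by (simp add: power2_eq_square algebra_simps)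
  also have "\<dots> \<le> (1 - \<bar>a\<bar>) * (1 + \<bar>a\<bar>)" using h by (intro mult_left_mono) auto
  also have "\<dots> = 1 - a\<^sup>2" by (simp add: power2_eq_square algebra_simps)
  finally show ?thesis .
qed

lemma frob_le:
  assumes "(\<Sum>i<m. \<Sum>j<n. (B i j)\<^sup>2) \<le> c\<^sup>2" "0 \<le> c"
  shows "frob m n B \<le> c"
  using real_sqrt_le_mono[OF assms(1)] assms(2) by (simp add: frob_def)

lemma frob_sq:
  assumes "frob m n B \<le> c"
  shows "(\<Sum>i<m. \<Sum>j<n. (B i j)\<^sup>2) \<le> c\<^sup>2"
proof -
  have S: "0 \<le> (\<Sum>i<m. \<Sum>j<n. (B i j)\<^sup>2)" by (intro sum_nonneg) auto
  have "(\<Sum>i<m. \<Sum>j<n. (B i j)\<^sup>2) = (frob m n B)\<^sup>2" using S by (simp add: frob_def)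
  also have "\<dots> \<le> c\<^sup>2" using assms S by (intro power_mono) (auto simp: frob_def)
  finally show ?thesis .
qed

theorem lemmaC1:
  fixes N r :: nat and lam :: "nat \<Rightarrow> real" and X :: rmat and \<epsilon> :: real
    and idx :: "nat \<Rightarrow> nat"
  assumes r_pos: "1 \<le> r" and rN: "r + 1 \<le> N"
    and lam_strict: "\<And>k. k < r \<Longrightarrow> lam k > lam (Suc k)"
    and lam_weak: "\<And>k. r \<le> k \<Longrightarrow> Suc k < N \<Longrightarrow> lam k \<ge> lam (Suc k)"
    and lam_nonneg: "lam (N - 1) \<ge> 0"
    and eps_pos: "\<epsilon> > 0"
    and X_st: "stiefel N r X"
    and grad_small: "frob N r (grad_g N r (mat_diag lam) X) \<le> \<epsilon>"
    and idx_range: "\<And>j. j < r \<Longrightarrow> idx j < N"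
    and idx_min: "\<And>j n. j < r \<Longrightarrow> n < N \<Longrightarrow>
        \<bar>mat_mult (mat_mult (mat_transp X) N (mat_diag lam)) N X j j - lam (idx j)\<bar>
          \<le> \<bar>mat_mult (mat_mult (mat_transp X) N (mat_diag lam)) N X j j - lam n\<bar>"
  shows "frob r r (mat_sub (mat_mult (mat_mult (mat_transp X) N (mat_diag lam)) N X)
                           (mat_diag (\<lambda>j. lam (idx j)))) \<le> 4 * \<epsilon>
       \<and> ((\<forall>j<r. idx j = j) \<longrightarrow>
           (\<exists>s :: nat \<Rightarrow> real.
              (\<forall>j<r. s j = 1 \<or> s j = -1) \<and>
              (\<forall>j<r. X j j \<ge> 0 \<longrightarrow> s j = 1) \<and>
              frob N r (mat_sub X (mat_mult (\<lambda>k j. std_basis (idx j) k) r (mat_diag s)))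
                \<le> 12 * \<epsilon> / Min {lam a - lam b | a b. a < b \<and> b \<le> r}))"
proof -
  define A where "A = (\<lambda>j k. \<Sum>n<N. X n j * lam n * X n k)"
  have MT: "mat_mult (mat_transp X) N (mat_diag lam) = (\<lambda>j n. if n < N then X n j * lam n else 0)"
    by (simp add: mat_mult_def mat_transp_def mat_diag_def fun_eq_iff sum_delta_r)
  have A_eq: "mat_mult (mat_mult (mat_transp X) N (mat_diag lam)) N X = A"
    unfolding MT by (auto simp: mat_mult_def A_def fun_eq_iff intro!: sum.cong)
  have orth: "\<And>k k'. k < r \<Longrightarrow> k' < r \<Longrightarrow> (\<Sum>n<N. X n k * X n k') = (if k = k' then 1 else 0)"
    using X_st by (simp add: stiefel_def mat_mult_def mat_transp_def mat_id_def mat_diag_def)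
  have Asym: "\<And>j k. A j k = A k j" by (simp add: A_def mult_ac)
  define U where "U = (\<lambda>n j. lam n * X n j - (\<Sum>k<r. X n k * A k j))"
  have P4: "mat_mult (mat_mult (mat_sub (mat_mult X r (mat_transp X)) mat_id) N (mat_diag lam)) N X n j = - U n j"
    if "n < N" for n j
  proof -
    have "mat_mult (mat_mult (mat_sub (mat_mult X r (mat_transp X)) mat_id) N (mat_diag lam)) N X n j
       = (\<Sum>m<N. ((\<Sum>k<r. X n k * X m k) - (if n = m then 1 else 0)) * lam m * X m j)"
    proof -
      have P3: "mat_mult (mat_sub (mat_mult X r (mat_transp X)) mat_id) N (mat_diag lam) n m
          = (if m < N then ((\<Sum>k<r. X n k * X m k) - (if n = m then 1 else 0)) * lam m else 0)" for m
        unfolding mat_mult_def[of _ N "mat_diag lam"]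
        by (simp add: mat_diag_def sum_delta_r mat_sub_def mat_mult_def mat_transp_def mat_id_def)
      show ?thesis by (simp add: mat_mult_def[of _ N X] P3 cong: if_cong)
    qed
    also have "\<dots> = (\<Sum>m<N. (\<Sum>k<r. X n k * X m k) * lam m * X m j) - (\<Sum>m<N. if n = m then lam m * X m j else 0)"
      by (subst sum_subtractf[symmetric]) (intro sum.cong refl; simp add: algebra_simps)
    also have "\<dots> = (\<Sum>m<N. \<Sum>k<r. X n k * (X m k * lam m * X m j)) - lam n * X n j"
      using that by (simp add: sum_distrib_right sum_distrib_left mult_ac)
    also have "\<dots> = (\<Sum>k<r. X n k * A k j) - lam n * X n j"
      by (subst sum.swap) (simp add: A_def sum_distrib_left)
    finally show ?thesis by (simp add: U_def)
  qed
  have Comm: "commutator r A (Nmat r) k j = A k j * (real k - real j)" if "k < r" "j < r" for k j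
  proof -
    have "commutator r A (Nmat r) k j = A k j * (real r - real j) - (real r - real k) * A k j"
      using that by (simp add: commutator_def mat_sub_def mat_mult_def Nmat_def mat_diag_def sum_delta_l sum_delta_r)
    then show ?thesis by (simp add: algebra_simps)
  qed
  have G_eq: "grad_g N r (mat_diag lam) X n j = -(real r - real j) * U n j + (\<Sum>k<r. X n k * (-(1/2) * (A k j * (real k - real j))))"
    if "n < N" "j < r" for n j
  proof -
    have "grad_g N r (mat_diag lam) X n j = -U n j * (real r - real j) - 1/2 * (\<Sum>k<r. X n k * commutator r A (Nmat r) k j)"
      unfolding grad_g_def A_eq mat_sub_def[of "mat_mult _ r (Nmat r)"] mat_scale_def using that
      by (simp only: mult_Nmat P4) (simp add: mat_mult_def)
    also have "\<dots> = -(real r - real j) * U n j + (\<Sum>k<r. X n k * (-(1/2) * (A k j * (real k - real j))))"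
    proof -
      have e: "(\<Sum>k<r. X n k * (-(1/2) * (A k j * (real k - real j)))) = -(1/2) * (\<Sum>k<r. X n k * commutator r A (Nmat r) k j)"
        using that by (simp add: Comm sum_distrib_left mult_ac)
      show ?thesis unfolding e by (simp add: algebra_simps)
    qed
    finally show ?thesis .
  qed
  have Uorth: "(\<Sum>n<N. U n j * X n m) = 0" if "j < r" "m < r" for j m
  proof -
    have e1: "(\<Sum>n<N. U n j * X n m) = (\<Sum>n<N. lam n * X n j * X n m) - (\<Sum>n<N. \<Sum>k<r. X n k * A k j * X n m)"
      by (simp add: U_def left_diff_distrib sum_subtractf sum_distrib_right)
    have e2: "(\<Sum>n<N. \<Sum>k<r. X n k * A k j * X n m) = (\<Sum>k<r. A k j * (\<Sum>n<N. X n k * X n m))"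
      by (subst sum.swap) (simp add: sum_distrib_left mult_ac)
    have e3: "(\<Sum>k<r. A k j * (\<Sum>n<N. X n k * X n m)) = A m j"
      using that by (simp add: orth sum_delta_r[where g="\<lambda>_. 1"])
    have e4: "(\<Sum>n<N. lam n * X n j * X n m) = A m j" by (simp add: A_def mult_ac)
    show ?thesis using e1 e2 e3 e4 by simp
  qed
  define u where "u = (\<lambda>j. \<Sum>n<N. (U n j)\<^sup>2)"
  define D where "D = (\<lambda>j. \<Sum>k<r. (if k = j then 0 else A k j)\<^sup>2)"
  define R where "R = (\<lambda>j. \<Sum>n<N. (X n j)\<^sup>2 * (lam n - A j j)\<^sup>2)"
  have u_nn: "0 \<le> u j" for j unfolding u_def by (intro sum_nonneg) auto
  have D_nn: "0 \<le> D j" for j unfolding D_def by (intro sum_nonneg) auto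
  have colG: "(\<Sum>n<N. (grad_g N r (mat_diag lam) X n j)\<^sup>2) = (real r - real j)\<^sup>2 * u j + (\<Sum>k<r. (-(1/2) * (A k j * (real k - real j)))\<^sup>2)"
    if "j < r" for j
  proof -
    have "(\<Sum>n<N. (grad_g N r (mat_diag lam) X n j)\<^sup>2) = (\<Sum>n<N. (-(real r - real j) * U n j + (\<Sum>k<r. X n k * (-(1/2) * (A k j * (real k - real j)))))\<^sup>2)"
      using that by (simp add: G_eq)
    also have "\<dots> = (\<Sum>n<N. (-(real r - real j) * U n j)\<^sup>2) + (\<Sum>k<r. (-(1/2) * (A k j * (real k - real j)))\<^sup>2)"
    proof (rule orth_expand[OF orth])
      fix k assume "k < r"
      have "(\<Sum>n<N. - (real r - real j) * U n j * X n k) = - (real r - real j) * (\<Sum>n<N. U n j * X n k)"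
        by (simp add: sum_distrib_left mult.assoc)
      then show "(\<Sum>n<N. - (real r - real j) * U n j * X n k) = 0" using Uorth[OF that \<open>k < r\<close>] by simp
    qed
    also have "\<dots> = (real r - real j)\<^sup>2 * u j + (\<Sum>k<r. (-(1/2) * (A k j * (real k - real j)))\<^sup>2)"
      by (simp add: u_def power_mult_distrib sum_distrib_left power2_commute)
    finally show ?thesis .
  qed
  have colG_ge: "u j + D j / 4 \<le> (\<Sum>n<N. (grad_g N r (mat_diag lam) X n j)\<^sup>2)" if "j < r" for j
  proof -
    have "1 \<le> real r - real j" using that by simp
    then have "1 \<le> (real r - real j)\<^sup>2" using one_le_power by blast
    then have a: "u j \<le> (real r - real j)\<^sup>2 * u j" using u_nn[of j] by (simp add: mult_le_cancel_right1)
    have b: "D j / 4 \<le> (\<Sum>k<r. (-(1/2) * (A k j * (real k - real j)))\<^sup>2)"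
      unfolding D_def sum_divide_distrib
    proof (rule sum_mono)
      fix k assume "k \<in> {..<r}"
      show "(if k = j then 0 else A k j)\<^sup>2 / 4 \<le> (-(1/2) * (A k j * (real k - real j)))\<^sup>2"
      proof (cases "k = j")
        case True then show ?thesis by simp
      next
        case False
        then have "1 \<le> \<bar>real k - real j\<bar>" by linarith
        then have "1 \<le> \<bar>real k - real j\<bar>\<^sup>2" using one_le_power by blast
        then have c: "1 \<le> (real k - real j)\<^sup>2" by simp
        have "(A k j)\<^sup>2 * 1 \<le> (A k j)\<^sup>2 * (real k - real j)\<^sup>2"
          by (rule mult_left_mono[OF c]) simp
        then show ?thesis using False by (simp add: power_mult_distrib power2_eq_square mult_ac)
      qed
    qed
    show ?thesis using a b colG[OF that] by linarith
  qed
  have gsq: "(\<Sum>n<N. \<Sum>j<r. (grad_g N r (mat_diag lam) X n j)\<^sup>2) \<le> \<epsilon>\<^sup>2"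
    by (rule frob_sq[OF grad_small])
  have total: "(\<Sum>j<r. u j + D j / 4) \<le> \<epsilon>\<^sup>2"
  proof -
    have "(\<Sum>j<r. u j + D j / 4) \<le> (\<Sum>j<r. \<Sum>n<N. (grad_g N r (mat_diag lam) X n j)\<^sup>2)"
      by (rule sum_mono) (use colG_ge in auto)
    also have "\<dots> = (\<Sum>n<N. \<Sum>j<r. (grad_g N r (mat_diag lam) X n j)\<^sup>2)" by (rule sum.swap)
    finally show ?thesis using gsq by linarith
  qed
  have R_eq: "R j = u j + D j" if "j < r" for j
  proof -
    have split: "(\<Sum>k<r. X n k * A k j) = X n j * A j j + (\<Sum>k<r. X n k * (if k = j then 0 else A k j))" for n
    proof -
      have "(\<Sum>k<r. X n k * A k j) = (\<Sum>k<r. (if k = j then X n j * A j j else 0) + X n k * (if k = j then 0 else A k j))"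
        by (intro sum.cong) auto
      also have "\<dots> = X n j * A j j + (\<Sum>k<r. X n k * (if k = j then 0 else A k j))"
        using that by (subst sum.distrib) simp
      finally show ?thesis .
    qed
    have pt: "X n j * (lam n - A j j) = U n j + (\<Sum>k<r. X n k * (if k = j then 0 else A k j))" for n
      unfolding U_def split by (simp add: algebra_simps)
    have "R j = (\<Sum>n<N. (U n j + (\<Sum>k<r. X n k * (if k = j then 0 else A k j)))\<^sup>2)"
      unfolding R_def by (simp add: pt[symmetric] power_mult_distrib)
    also have "\<dots> = u j + D j"
      unfolding u_def D_def by (rule orth_expand[OF orth Uorth[OF that]])
    finally show ?thesis .
  qed
  have one: "(\<Sum>n<N. (X n j)\<^sup>2) = 1" if "j < r" for j
    using orth[OF that that] by (simp add: power2_eq_square)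
  have idx_minA: "\<bar>A j j - lam (idx j)\<bar> \<le> \<bar>A j j - lam n\<bar>" if "j < r" "n < N" for j n
    using idx_min[OF that] unfolding A_eq .
  have Ray: "(A j j - lam (idx j))\<^sup>2 \<le> R j" if "j < r" for j
  proof -
    have "(A j j - lam (idx j))\<^sup>2 = (\<Sum>n<N. (X n j)\<^sup>2 * (A j j - lam (idx j))\<^sup>2)"
      using one[OF that] by (simp add: sum_distrib_right[symmetric])
    also have "\<dots> \<le> R j" unfolding R_def
    proof (rule sum_mono)
      fix n assume "n \<in> {..<N}"
      then have "\<bar>A j j - lam (idx j)\<bar> \<le> \<bar>lam n - A j j\<bar>" using idx_minA[OF that] by (simp add: abs_minus_commute)
      then have "(A j j - lam (idx j))\<^sup>2 \<le> (lam n - A j j)\<^sup>2" by (simp add: abs_le_square_iff)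
      then show "(X n j)\<^sup>2 * (A j j - lam (idx j))\<^sup>2 \<le> (X n j)\<^sup>2 * (lam n - A j j)\<^sup>2"
        by (intro mult_left_mono) auto
    qed
    finally show ?thesis .
  qed
  have partI: "frob r r (mat_sub (mat_mult (mat_mult (mat_transp X) N (mat_diag lam)) N X)
                           (mat_diag (\<lambda>j. lam (idx j)))) \<le> 4 * \<epsilon>"
    unfolding A_eq
  proof (rule frob_le)
    have col: "(\<Sum>i<r. (A i j - (if i = j then lam (idx j) else 0))\<^sup>2) = (A j j - lam (idx j))\<^sup>2 + D j"
      if "j < r" for j
    proof -
      have "(\<Sum>i<r. (A i j - (if i = j then lam (idx j) else 0))\<^sup>2)
          = (\<Sum>i<r. (if i = j then (A j j - lam (idx j))\<^sup>2 else 0) + (if i = j then 0 else A i j)\<^sup>2)"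
        by (intro sum.cong) auto
      also have "\<dots> = (A j j - lam (idx j))\<^sup>2 + D j" using that by (simp add: sum.distrib D_def)
      finally show ?thesis .
    qed
    have "(\<Sum>i<r. \<Sum>j<r. (mat_sub A (mat_diag (\<lambda>j. lam (idx j))) i j)\<^sup>2)
        = (\<Sum>j<r. \<Sum>i<r. (A i j - (if i = j then lam (idx j) else 0))\<^sup>2)"
      by (subst sum.swap) (intro sum.cong refl, auto simp: mat_sub_def mat_diag_def)
    also have "\<dots> \<le> (\<Sum>j<r. 8 * (u j + D j / 4))"
    proof (rule sum_mono)
      fix j assume j: "j \<in> {..<r}"
      then show "(\<Sum>i<r. (A i j - (if i = j then lam (idx j) else 0))\<^sup>2) \<le> 8 * (u j + D j / 4)"
        using col[of j] Ray[of j] R_eq[of j] u_nn[of j] D_nn[of j] by simp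
    qed
    also have "\<dots> = 8 * (\<Sum>j<r. u j + D j / 4)" by (simp add: sum_distrib_left)
    also have "\<dots> \<le> (4 * \<epsilon>)\<^sup>2" proof -
      have h: "(4 * \<epsilon>)\<^sup>2 = 16 * \<epsilon>\<^sup>2" by (simp add: power_mult_distrib)
      show ?thesis using total h zero_le_power2[of \<epsilon>] by linarith
    qed
    finally show "(\<Sum>i<r. \<Sum>j<r. (mat_sub A (mat_diag (\<lambda>j. lam (idx j))) i j)\<^sup>2) \<le> (4 * \<epsilon>)\<^sup>2" .
    show "0 \<le> 4 * \<epsilon>" using eps_pos by simp
  qed
  have strict: "lam b < lam a" if "a < b" "b \<le> r" for a b
    using that
  proof (induction b)
    case 0 then show ?case by simp
  next
    case (Suc b)
    have h: "lam (Suc b) < lam b" using Suc.prems lam_strict by simp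
    show ?case
    proof (cases "a = b")
      case True then show ?thesis using h by simp
    next
      case False then have "lam b < lam a" using Suc by simp
      then show ?thesis using h by simp
    qed
  qed
  have weak: "lam b \<le> lam a" if "r \<le> a" "a \<le> b" "b < N" for a b
    using that
  proof (induction b)
    case 0 then show ?case by simp
  next
    case (Suc b)
    show ?case
    proof (cases "a = Suc b")
      case True then show ?thesis by simp
    next
      case False
      then have "lam b \<le> lam a" using Suc by simp
      moreover have "lam (Suc b) \<le> lam b" using Suc.prems False by (intro lam_weak) auto
      ultimately show ?thesis by simp
    qed
  qed
  define S where "S = {lam a - lam b | a b. a < b \<and> b \<le> r}"
  define d where "d = Min S"
  have finS: "finite S"
  proof (rule finite_subset)
    show "S \<subseteq> (\<lambda>p. lam (fst p) - lam (snd p)) ` ({..r} \<times> {..r})" unfolding S_def by force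
  qed auto
  have neS: "S \<noteq> {}" unfolding S_def using r_pos by blast
  have S_pos: "x > 0" if "x \<in> S" for x using that strict unfolding S_def by force
  have d_pos: "d > 0" unfolding d_def using Min_in[OF finS neS] S_pos by blast
  have d_le: "d \<le> x" if "x \<in> S" for x unfolding d_def using Min_le[OF finS that] .
  have gap: "d \<le> \<bar>lam n - lam j\<bar>" if "j < r" "n < N" "n \<noteq> j" for j n
  proof (cases "n < j")
    case True
    then have "lam n - lam j \<in> S" using that unfolding S_def by force
    then show ?thesis using d_le S_pos by force
  next
    case False
    then have jn: "j < n" using that by simp
    show ?thesis
    proof (cases "n \<le> r")
      case True
      then have "lam j - lam n \<in> S" using jn unfolding S_def by force
      then show ?thesis using d_le S_pos by force
    next
      case False
      then have "lam j - lam r \<in> S" using that unfolding S_def by force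
      then have a: "d \<le> lam j - lam r" using d_le by blast
      have "lam n \<le> lam r" using weak[of r n] False that by simp
      then show ?thesis using a by linarith
    qed
  qed
  have partII: "(\<forall>j<r. idx j = j) \<longrightarrow>
           (\<exists>s :: nat \<Rightarrow> real.
              (\<forall>j<r. s j = 1 \<or> s j = -1) \<and>
              (\<forall>j<r. X j j \<ge> 0 \<longrightarrow> s j = 1) \<and>
              frob N r (mat_sub X (mat_mult (\<lambda>k j. std_basis (idx j) k) r (mat_diag s)))
                \<le> 12 * \<epsilon> / Min {lam a - lam b | a b. a < b \<and> b \<le> r})"
  proof
    assume idj: "\<forall>j<r. idx j = j"
    define s where "s = (\<lambda>j. if X j j \<ge> 0 then 1 else -1::real)"
    have E: "mat_mult (\<lambda>k j. std_basis (idx j) k) r (mat_diag s) n j = (if n = j then s j else 0)" if "j < r" for n j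
      using that idj by (simp add: mult_diag std_basis_def)
    have col: "(\<Sum>n<N. (X n j - (if n = j then s j else 0))\<^sup>2) \<le> 8 * R j / d\<^sup>2" if "j < r" for j
    proof -
      have jN: "j < N" using that rN by simp
      define t where "t = (\<Sum>n<N. (if n = j then 0 else X n j)\<^sup>2)"
      have t_nn: "0 \<le> t" unfolding t_def by (intro sum_nonneg) auto
      have ht: "t + (X j j)\<^sup>2 = 1"
      proof -
        have "(\<Sum>n<N. (X n j)\<^sup>2) = (\<Sum>n<N. (if n = j then 0 else X n j)\<^sup>2 + (if n = j then (X j j)\<^sup>2 else 0))"
          by (intro sum.cong) auto
        also have "\<dots> = t + (X j j)\<^sup>2" using jN by (simp add: sum.distrib t_def)
        finally show ?thesis using one[OF that] by simp
      qed
      have hc: "(\<Sum>n<N. (X n j - (if n = j then s j else 0))\<^sup>2) = t + (X j j - s j)\<^sup>2"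
      proof -
        have "(\<Sum>n<N. (X n j - (if n = j then s j else 0))\<^sup>2) = (\<Sum>n<N. (if n = j then 0 else X n j)\<^sup>2 + (if n = j then (X j j - s j)\<^sup>2 else 0))"
          by (intro sum.cong) auto
        also have "\<dots> = t + (X j j - s j)\<^sup>2" using jN by (simp add: sum.distrib t_def)
        finally show ?thesis .
      qed
      have hs: "(X j j - s j)\<^sup>2 \<le> t"
      proof -
        have "(X j j)\<^sup>2 \<le> 1\<^sup>2" using ht t_nn by simp
        then have a1: "\<bar>X j j\<bar> \<le> 1" using abs_le_square_iff[of "X j j" 1] by simp
        have "(X j j - s j)\<^sup>2 = (\<bar>X j j\<bar> - 1)\<^sup>2"
          by (cases "X j j \<ge> 0") (auto simp: s_def power2_eq_square algebra_simps)
        also have "\<dots> \<le> 1 - (X j j)\<^sup>2" by (rule sign_sq[OF a1])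
        finally show ?thesis using ht by simp
      qed
      have hR: "t * (d\<^sup>2 / 4) \<le> R j"
      proof -
        have "t * (d\<^sup>2 / 4) = (\<Sum>n<N. (if n = j then 0 else X n j)\<^sup>2 * (d\<^sup>2 / 4))"
          unfolding t_def by (simp add: sum_distrib_right)
        also have "\<dots> \<le> R j" unfolding R_def
        proof (rule sum_mono)
          fix n assume n: "n \<in> {..<N}"
          show "(if n = j then 0 else X n j)\<^sup>2 * (d\<^sup>2 / 4) \<le> (X n j)\<^sup>2 * (lam n - A j j)\<^sup>2"
          proof (cases "n = j")
            case True then show ?thesis by simp
          next
            case False
            have g: "d \<le> \<bar>lam n - lam j\<bar>" using gap[OF that _ False] n by simp
            have m: "\<bar>A j j - lam j\<bar> \<le> \<bar>A j j - lam n\<bar>" using idx_minA[OF that, of n] n idj that by simp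
            have "d / 2 \<le> \<bar>lam n - A j j\<bar>" using g m by linarith
            then have "(d / 2)\<^sup>2 \<le> \<bar>lam n - A j j\<bar>\<^sup>2" using d_pos by (intro power_mono) auto
            then have "d\<^sup>2 / 4 \<le> (lam n - A j j)\<^sup>2" by (simp add: power_divide)
            then have "(X n j)\<^sup>2 * (d\<^sup>2 / 4) \<le> (X n j)\<^sup>2 * (lam n - A j j)\<^sup>2"
              by (intro mult_left_mono) auto
            then show ?thesis using False by simp
          qed
        qed
        finally show ?thesis .
      qed
      have "t \<le> 4 * R j / d\<^sup>2" using hR d_pos by (simp add: field_simps)
      then show ?thesis using hc hs by simp
    qed
    have Seq: "Min {lam a - lam b | a b. a < b \<and> b \<le> r} = d" unfolding d_def S_def ..
    have "frob N r (mat_sub X (mat_mult (\<lambda>k j. std_basis (idx j) k) r (mat_diag s))) \<le> 12 * \<epsilon> / d"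
    proof (rule frob_le)
      have "(\<Sum>n<N. \<Sum>j<r. (mat_sub X (mat_mult (\<lambda>k j. std_basis (idx j) k) r (mat_diag s)) n j)\<^sup>2)
          = (\<Sum>j<r. \<Sum>n<N. (X n j - (if n = j then s j else 0))\<^sup>2)"
        by (subst sum.swap) (intro sum.cong refl, auto simp: mat_sub_def E)
      also have "\<dots> \<le> (\<Sum>j<r. 8 * R j / d\<^sup>2)" by (rule sum_mono) (use col in auto)
      also have "\<dots> = 8 / d\<^sup>2 * (\<Sum>j<r. u j + D j)"
        by (simp add: sum_distrib_left R_eq)
      also have "\<dots> \<le> 8 / d\<^sup>2 * (4 * \<epsilon>\<^sup>2)"
      proof (rule mult_left_mono)
        have "(\<Sum>j<r. u j + D j) \<le> (\<Sum>j<r. 4 * (u j + D j / 4))"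
          by (rule sum_mono) (use u_nn in auto)
        also have "\<dots> = 4 * (\<Sum>j<r. u j + D j / 4)" by (rule sum_distrib_left[symmetric])
        also have "\<dots> \<le> 4 * \<epsilon>\<^sup>2" using total by simp
        finally show "(\<Sum>j<r. u j + D j) \<le> 4 * \<epsilon>\<^sup>2" .
      qed simp
      also have "\<dots> \<le> (12 * \<epsilon> / d)\<^sup>2"
        using d_pos by (simp add: power_divide power_mult_distrib divide_right_mono)
      finally show "(\<Sum>n<N. \<Sum>j<r. (mat_sub X (mat_mult (\<lambda>k j. std_basis (idx j) k) r (mat_diag s)) n j)\<^sup>2) \<le> (12 * \<epsilon> / d)\<^sup>2" .
      show "0 \<le> 12 * \<epsilon> / d" using eps_pos d_pos by simp
    qed
    then show "\<exists>s :: nat \<Rightarrow> real.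
              (\<forall>j<r. s j = 1 \<or> s j = -1) \<and>
              (\<forall>j<r. X j j \<ge> 0 \<longrightarrow> s j = 1) \<and>
              frob N r (mat_sub X (mat_mult (\<lambda>k j. std_basis (idx j) k) r (mat_diag s)))
                \<le> 12 * \<epsilon> / Min {lam a - lam b | a b. a < b \<and> b \<le> r}"
      unfolding Seq by (intro exI[of _ s]) (auto simp: s_def)
  qed
  show ?thesis using partI partII by blast
qed

end
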